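(* Let $n\ge1$, $\mathcal{I}=\mathbb{Z}_{\ge1}$, $\Gamma_l=\{x\in\mathbb{Z}^n_{\ge0}\mid\sum_{i=1}^nx_i=l\}$ for $l\in\mathcal{I}$, and let $\pi_l$ be probability distributions on $\Gamma_l$ strictly positive on every element. Suppose: (a) whenever $x,x+e_j-e_k\in\Gamma_i$ and $y,y+e_j-e_k\in\Gamma_{i+1}$ ($i\in\mathcal{I}$) with $x_j=y_j$, $x_k=y_k$, we have $\frac{\pi_i(x+e_j-e_k)}{\pi_i(x)}=\frac{\pi_{i+1}(y+e_j-e_k)}{\pi_{i+1}(y)}$; (b) for each $i\in\mathcal{I}$ there is a constant $a_i$ depending only on $i$ such that whenever $x\in\Gamma_i$, $x+e_j,y\in\Gamma_{i+1}$, $y+e_j\in\Gamma_{i+2}$ with $x_j=y_j$, we have $\frac{\pi_{i+1}(x+e_j)}{\pi_i(x)}=a_i\frac{\pi_{i+2}(y+e_j)}{\pi_{i+1}(y)}$. Then the family $(\Gamma_l,\pi_l)_{l\in\mathcal{I}}$ has product-form distribution: there exist $f_i:\mathbb{Z}_{\ge0}\to\mathbb{R}_{>0}$, $i=1,\dots,n$, with $\pi_l(x)=Z_l^{-1}\prod_{i=1}^nf_i(x_i)$ for all $l\in\mathcal{I}$ and $x\in\Gamma_l$, where $Z_l=\sum_{x\in\Gamma_l}\prod_if_i(x_i)$.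
   Context: $e_j$ denotes the $j$-th standard basis vector of $\mathbb{Z}^n$. *)

theory Defs
  imports Complex_Main "HOL-Library.Function_Algebras"
begin

text \<open>Vectors in Z^n are modelled as functions nat => int, with coordinates
  0..n-1 (standing for 1..n) and value 0 outside.\<close>

definition unitv :: "nat \<Rightarrow> nat \<Rightarrow> int" where
  "unitv j = (\<lambda>i. if i = j then 1 else 0)"

definition Gamma :: "nat \<Rightarrow> nat \<Rightarrow> (nat \<Rightarrow> int) set" where
  "Gamma n l = {x. (\<forall>i<n. 0 \<le> x i) \<and> (\<forall>i\<ge>n. x i = 0) \<and> (\<Sum>i<n. x i) = int l}"

end

theory Submission
  imports Defs
begin

lemma sum_unitv: "j < n \<Longrightarrow> (\<Sum>i<n. unitv j i) = 1"
  unfolding unitv_def by (simp add: sum.delta)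

lemma Gamma_add: assumes "x \<in> Gamma n l" "j < n" shows "x + unitv j \<in> Gamma n (l+1)"
proof -
  have "(\<Sum>i<n. (x + unitv j) i) = (\<Sum>i<n. x i) + (\<Sum>i<n. unitv j i)"
    by (simp add: sum.distrib)
  then show ?thesis using assms sum_unitv[OF assms(2)]
    unfolding Gamma_def by (auto simp: unitv_def)
qed

lemma Gamma_le: assumes "x \<in> Gamma n l" "j < n" shows "x j \<le> int l"
proof -
  have "x j \<le> (\<Sum>i<n. x i)"
    by (rule member_le_sum) (use assms in \<open>auto simp: Gamma_def\<close>)
  then show ?thesis using assms by (simp add: Gamma_def)
qed

lemma Gamma_dec: assumes "z \<in> Gamma n (Suc l)"
  shows "\<exists>j<n. z - unitv j \<in> Gamma n l \<and> z = (z - unitv j) + unitv j \<and> z j \<ge> 1"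
proof -
  have "\<exists>j<n. z j \<ge> 1"
  proof (rule ccontr)
    assume "\<not> ?thesis"
    then have "(\<Sum>i<n. z i) \<le> (\<Sum>i<n. 0)" by (intro sum_mono) auto
    then show False using assms by (simp add: Gamma_def)
  qed
  then obtain j where j: "j < n" "z j \<ge> 1" by auto
  have "(\<Sum>i<n. (z - unitv j) i) = (\<Sum>i<n. z i) - (\<Sum>i<n. unitv j i)"
    by (simp add: sum_subtractf)
  then have "z - unitv j \<in> Gamma n l" using assms j sum_unitv[OF j(1)]
    unfolding Gamma_def by (auto simp: unitv_def)
  then show ?thesis using j by auto
qed

lemma Gamma0: "x \<in> Gamma n 0 \<Longrightarrow> x = 0"
proof -
  assume a: "x \<in> Gamma n 0"
  then have "\<forall>i\<in>{..<n}. x i = 0"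
    using sum_nonneg_eq_0_iff[of "{..<n}" x] by (auto simp: Gamma_def)
  with a show "x = 0" by (auto simp: Gamma_def fun_eq_iff) (metis not_le lessThan_iff)
qed

definition pt :: "nat \<Rightarrow> nat \<Rightarrow> nat \<Rightarrow> nat \<Rightarrow> nat \<Rightarrow> int" where
  "pt j k m r = (\<lambda>i. int m * unitv j i + int r * unitv k i)"

lemma pt_Gamma: "j < n \<Longrightarrow> k < n \<Longrightarrow> j \<noteq> k \<Longrightarrow> pt j k m r \<in> Gamma n (m + r)"
  unfolding Gamma_def pt_def by (auto simp: sum.distrib sum_distrib_left[symmetric] sum_unitv unitv_def)

lemma pt_j: "j \<noteq> k \<Longrightarrow> pt j k m r j = int m"
  unfolding pt_def unitv_def by auto

lemma unitv_Gamma: "j < n \<Longrightarrow> unitv j \<in> Gamma n 1"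
  unfolding Gamma_def by (auto simp: sum_unitv unitv_def)

lemma main_n2:
  fixes n :: nat and \<pi> :: "nat \<Rightarrow> (nat \<Rightarrow> int) \<Rightarrow> real"
  assumes n2: "n \<ge> 2"
    and pos: "\<And>l x. l \<ge> 1 \<Longrightarrow> x \<in> Gamma n l \<Longrightarrow> \<pi> l x > 0"
    and cond_b: "\<exists>a :: nat \<Rightarrow> real. \<forall>i\<ge>1. \<forall>x y j.
        x \<in> Gamma n i \<longrightarrow> x + unitv j \<in> Gamma n (i + 1) \<longrightarrow>
        y \<in> Gamma n (i + 1) \<longrightarrow> y + unitv j \<in> Gamma n (i + 2) \<longrightarrow>
        x j = y j \<longrightarrow>
        \<pi> (i + 1) (x + unitv j) / \<pi> i x = a i * (\<pi> (i + 2) (y + unitv j) / \<pi> (i + 1) y)"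
  shows "\<exists>f :: nat \<Rightarrow> nat \<Rightarrow> real. (\<forall>i<n. \<forall>m. f i m > 0) \<and>
     (\<forall>l\<ge>1. \<exists>C. \<forall>x\<in>Gamma n l. \<pi> l x = C * (\<Prod>i<n. f i (nat (x i))))"
proof -
  obtain a where a: "\<forall>i\<ge>1. \<forall>x y j.
        x \<in> Gamma n i \<longrightarrow> x + unitv j \<in> Gamma n (i + 1) \<longrightarrow>
        y \<in> Gamma n (i + 1) \<longrightarrow> y + unitv j \<in> Gamma n (i + 2) \<longrightarrow>
        x j = y j \<longrightarrow>
        \<pi> (i + 1) (x + unitv j) / \<pi> i x = a i * (\<pi> (i + 2) (y + unitv j) / \<pi> (i + 1) y)"
    using cond_b by blast
  define U where "U l x j = \<pi> (l+1) (x + unitv j) / \<pi> l x" for l x j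
  define \<beta> where "\<beta> l = U l (pt 0 1 0 l) 0" for l
  define R where "R l x j = U l x j / \<beta> l" for l x j
  define kk where "kk j = (if j = 0 then 1 else 0 :: nat)" for j :: nat
  define \<alpha> where "\<alpha> j m = R (m+1) (pt j (kk j) m 1) j" for j m
  have kk: "kk j < n" "kk j \<noteq> j" for j using n2 by (auto simp: kk_def)
  have Upos: "U l x j > 0" if "l \<ge> 1" "x \<in> Gamma n l" "j < n" for l x j
    using pos[OF that(1,2)] pos[of "l+1" "x + unitv j"] Gamma_add[OF that(2,3)] that
    by (simp add: U_def)
  have p01: "pt 0 1 0 l \<in> Gamma n l" for l using pt_Gamma[of 0 n 1 0 l] n2 by auto
  have p01z: "pt 0 1 0 l 0 = 0" for l using pt_j[of 0 1 0 l] by simp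
  have bpos: "\<beta> l > 0" if "l \<ge> 1" for l
    using Upos[OF that p01] n2 by (simp add: \<beta>_def)
  have aU: "U l x j = a l * U (l+1) y j"
    if "l\<ge>1" "x \<in> Gamma n l" "y \<in> Gamma n (l+1)" "j < n" "x j = y j" for l x y j
  proof -
    have "y + unitv j \<in> Gamma n (l+2)" using Gamma_add[OF that(3,4)] by simp
    then show ?thesis using a that Gamma_add[OF that(2,4)] unfolding U_def
      by (auto simp: add.assoc)
  qed
  have G: "R l x j = R (l+1) y j"
    if "l\<ge>1" "x \<in> Gamma n l" "y \<in> Gamma n (l+1)" "j < n" "x j = y j" for l x y j
  proof -
    have b: "\<beta> l = a l * \<beta> (l+1)" unfolding \<beta>_def
      by (rule aU) (use that n2 p01 p01z in auto)
    have "a l \<noteq> 0" using b bpos[OF that(1)] by auto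
    then show ?thesis unfolding R_def aU[OF that] b by simp
  qed
  have chain: "R L (pt j (kk j) m (L-m)) j = \<alpha> j m" if "j < n" "m+1 \<le> L" for j m L
    using that(2)
  proof (induction L rule: dec_induct)
    case base
    then show ?case by (simp add: \<alpha>_def)
  next
    case (step L)
    have "R L (pt j (kk j) m (L-m)) j = R (L+1) (pt j (kk j) m (Suc L - m)) j"
      apply (rule G)
      using step pt_Gamma[OF that(1) kk(1) kk(2)[symmetric], of m "L-m"]
        pt_Gamma[OF that(1) kk(1) kk(2)[symmetric], of m "Suc L-m"] pt_j[OF kk(2)[symmetric]]
        that by auto
    then show ?case using step by simp
  qed
  have key: "R l x j = \<alpha> j (nat (x j))" if "l \<ge> 1" "x \<in> Gamma n l" "j < n" for l x j
  proof -
    have x0: "x j \<ge> 0" using that by (auto simp: Gamma_def)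
    have xl: "nat (x j) \<le> l" using Gamma_le[OF that(2,3)] by auto
    have "R l x j = R (l+1) (pt j (kk j) (nat (x j)) (l + 1 - nat (x j))) j"
      apply (rule G)
      using that pt_Gamma[OF that(3) kk(1) kk(2)[symmetric], of "nat (x j)" "l + 1 - nat (x j)"]
        pt_j[OF kk(2)[symmetric]] x0 xl by auto
    also have "\<dots> = \<alpha> j (nat (x j))" by (rule chain) (use that xl in auto)
    finally show ?thesis .
  qed
  have stepeq: "\<pi> (l+1) (x + unitv j) = \<pi> l x * \<alpha> j (nat (x j)) * \<beta> l"
    if "l \<ge> 1" "x \<in> Gamma n l" "j < n" for l x j
  proof -
    have "\<pi> l x > 0" "\<beta> l > 0" using pos that bpos by auto
    then show ?thesis using key[OF that] unfolding R_def U_def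
      by (simp add: field_simps)
  qed
  have apos: "\<alpha> j m > 0" if "j < n" for j m
  proof -
    have "pt j (kk j) m 1 \<in> Gamma n (m+1)" using pt_Gamma[OF that kk(1) kk(2)[symmetric]] .
    then show ?thesis unfolding \<alpha>_def R_def using Upos bpos that by simp
  qed
  define f where "f j m = (\<Prod>t<m. \<alpha> j t)" for j m
  define P where "P x = (\<Prod>i<n. f i (nat (x i)))" for x :: "nat \<Rightarrow> int"
  have fpos: "\<forall>i<n. \<forall>m. f i m > 0" unfolding f_def using apos by (auto intro: prod_pos)
  have Padd: "P (x + unitv j) = P x * \<alpha> j (nat (x j))"
    if "\<forall>i<n. x i \<ge> 0" "j < n" for x j
  proof -
    have "P (x + unitv j) = (\<Prod>i<n. f i (nat (x i)) * (if i = j then \<alpha> j (nat (x j)) else 1))"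
      unfolding P_def
    proof (rule prod.cong[OF refl])
      fix i assume "i \<in> {..<n}"
      then have "x i \<ge> 0" using that by auto
      then show "f i (nat ((x + unitv j) i)) = f i (nat (x i)) * (if i = j then \<alpha> j (nat (x j)) else 1)"
        by (auto simp: unitv_def f_def nat_add_distrib)
    qed
    also have "\<dots> = P x * \<alpha> j (nat (x j))"
      unfolding prod.distrib P_def using that by (simp add: prod.delta)
    finally show ?thesis .
  qed
  have P0: "P 0 = 1" unfolding P_def f_def by simp
  have Pu: "P (unitv j) = \<alpha> j 0" if "j < n" for j
    using Padd[of 0 j] that P0 by simp
  define V where "V = \<pi> 1 (unitv 0) / \<alpha> 0 0"
  have base1: "\<pi> 1 (unitv j) = V * \<alpha> j 0" if "j < n" for j
  proof (cases "j = 0")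
    case True
    then show ?thesis using apos[of 0 0] n2 by (simp add: V_def)
  next
    case False
    have u0: "unitv 0 \<in> Gamma n 1" "unitv j \<in> Gamma n 1" using unitv_Gamma n2 that by auto
    have "\<pi> 2 (unitv 0 + unitv j) = \<pi> 1 (unitv 0) * \<alpha> j 0 * \<beta> 1"
      using stepeq[OF _ u0(1) that] False by (simp add: unitv_def[of 0] numeral_2_eq_2)
    moreover have "\<pi> 2 (unitv j + unitv 0) = \<pi> 1 (unitv j) * \<alpha> 0 0 * \<beta> 1"
      using stepeq[OF _ u0(2), of 0] False n2 by (simp add: unitv_def[of j] numeral_2_eq_2)
    ultimately have "\<pi> 1 (unitv 0) * \<alpha> j 0 = \<pi> 1 (unitv j) * \<alpha> 0 0"
      using bpos[of 1] by (simp add: add.commute)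
    then show ?thesis using apos[of 0 0] apos[OF that] n2 unfolding V_def
      by (simp add: field_simps)
  qed
  have mainind: "\<exists>C. \<forall>x\<in>Gamma n l. \<pi> l x = C * P x" if "l \<ge> 1" for l
    using that
  proof (induction l rule: dec_induct)
    case base
    show ?case
    proof (intro exI ballI)
      fix x assume "x \<in> Gamma n 1"
      then obtain j where j: "j<n" "x - unitv j \<in> Gamma n 0" "x = (x - unitv j) + unitv j"
        using Gamma_dec[of x n 0] by auto
      then have "x = unitv j" using Gamma0 by force
      then show "\<pi> 1 x = V * P x" using base1[OF j(1)] Pu[OF j(1)] by simp
    qed
  next
    case (step l)
    then obtain C where C: "\<forall>x\<in>Gamma n l. \<pi> l x = C * P x" by auto
    show ?case
    proof (intro exI ballI)
      fix z assume "z \<in> Gamma n (Suc l)"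
      then obtain j where j: "j<n" "z - unitv j \<in> Gamma n l" "z = (z - unitv j) + unitv j"
        using Gamma_dec[of z n l] by auto
      define x where "x = z - unitv j"
      have xg: "x \<in> Gamma n l" "z = x + unitv j" using j x_def by auto
      have "\<forall>i<n. x i \<ge> 0" using xg by (auto simp: Gamma_def)
      then have "\<pi> (Suc l) z = C * \<beta> l * P z"
        using stepeq[OF step(1) xg(1) j(1)] C xg Padd[of x j] j(1) by simp
      then show "\<pi> (Suc l) z = (C * \<beta> l) * P z" by simp
    qed
  qed
  show ?thesis using fpos mainind unfolding P_def by blast
qed

theorem proposition6p5:
  fixes n :: nat and \<pi> :: "nat \<Rightarrow> (nat \<Rightarrow> int) \<Rightarrow> real"
  assumes n_pos: "n \<ge> 1"
    and pos: "\<And>l x. l \<ge> 1 \<Longrightarrow> x \<in> Gamma n l \<Longrightarrow> \<pi> l x > 0"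
    and prob: "\<And>l. l \<ge> 1 \<Longrightarrow> (\<Sum>x\<in>Gamma n l. \<pi> l x) = 1"
    and cond_a: "\<And>i x y j k. i \<ge> 1 \<Longrightarrow>
        x \<in> Gamma n i \<Longrightarrow> x + unitv j - unitv k \<in> Gamma n i \<Longrightarrow>
        y \<in> Gamma n (i + 1) \<Longrightarrow> y + unitv j - unitv k \<in> Gamma n (i + 1) \<Longrightarrow>
        x j = y j \<Longrightarrow> x k = y k \<Longrightarrow>
        \<pi> i (x + unitv j - unitv k) / \<pi> i x
          = \<pi> (i + 1) (y + unitv j - unitv k) / \<pi> (i + 1) y"
    and cond_b: "\<exists>a :: nat \<Rightarrow> real. \<forall>i\<ge>1. \<forall>x y j.
        x \<in> Gamma n i \<longrightarrow> x + unitv j \<in> Gamma n (i + 1) \<longrightarrow>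
        y \<in> Gamma n (i + 1) \<longrightarrow> y + unitv j \<in> Gamma n (i + 2) \<longrightarrow>
        x j = y j \<longrightarrow>
        \<pi> (i + 1) (x + unitv j) / \<pi> i x = a i * (\<pi> (i + 2) (y + unitv j) / \<pi> (i + 1) y)"
  shows "\<exists>f :: nat \<Rightarrow> nat \<Rightarrow> real. (\<forall>i<n. \<forall>m. f i m > 0) \<and>
     (\<forall>l\<ge>1. \<forall>x\<in>Gamma n l.
        \<pi> l x = (\<Prod>i<n. f i (nat (x i))) / (\<Sum>y\<in>Gamma n l. \<Prod>i<n. f i (nat (y i))))"
proof (cases "n = 1")
  case True
  show ?thesis
  proof (intro exI conjI allI impI ballI)
    show "0 < (\<lambda>i m. 1::real) i m" for i m by simp
    fix l x assume l: "l \<ge> 1" and x: "x \<in> Gamma n l"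
    have "Gamma n l = {x}"
    proof safe
      fix y assume y: "y \<in> Gamma n l"
      show "y = x"
      proof
        fix i show "y i = x i" using x y True by (cases "i = 0") (auto simp: Gamma_def)
      qed
    qed (use x in auto)
    then show "\<pi> l x = (\<Prod>i<n. (\<lambda>i m. 1::real) i (nat (x i))) /
        (\<Sum>y\<in>Gamma n l. \<Prod>i<n. (\<lambda>i m. 1::real) i (nat (y i)))"
      using prob[OF l] by simp
  qed
next
  case False
  then have n2: "n \<ge> 2" using n_pos by auto
  obtain f where f: "\<forall>i<n. \<forall>m. f i m > 0"
    "\<forall>l\<ge>1. \<exists>C. \<forall>x\<in>Gamma n l. \<pi> l x = C * (\<Prod>i<n. f i (nat (x i)))"
    using main_n2[OF n2 pos cond_b] by blast
  show ?thesis
  proof (intro exI conjI allI impI ballI)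
    show "0 < f i m" if "i < n" for i m using f(1) that by auto
    fix l x assume l: "l \<ge> 1" and x: "x \<in> Gamma n l"
    obtain C where C: "\<forall>x\<in>Gamma n l. \<pi> l x = C * (\<Prod>i<n. f i (nat (x i)))"
      using f(2) l by blast
    have "1 = (\<Sum>y\<in>Gamma n l. \<pi> l y)" using prob[OF l] by simp
    also have "\<dots> = C * (\<Sum>y\<in>Gamma n l. \<Prod>i<n. f i (nat (y i)))"
      unfolding sum_distrib_left using C by simp
    finally have S: "1 = C * (\<Sum>y\<in>Gamma n l. \<Prod>i<n. f i (nat (y i)))" .
    then have Sinv: "(\<Sum>y\<in>Gamma n l. \<Prod>i<n. f i (nat (y i))) = 1 / C"
    proof -
      have "C \<noteq> 0" using S by auto
      then show ?thesis using S by (simp add: eq_divide_eq mult.commute)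
    qed
    then show "\<pi> l x = (\<Prod>i<n. f i (nat (x i))) / (\<Sum>y\<in>Gamma n l. \<Prod>i<n. f i (nat (y i)))"
      using C x unfolding Sinv by simp
  qed
qed

end
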